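(* Let $(G,r)$ be a symmetric group, $r(a,b)=({}^ab,a^b)$, with associated left brace $(G,+,\cdot)$. (1) If $(G,r)$ satisfies lri, then the brace satisfies Raut, and $({}^{({}^va)}u)({}^av)=({}^au)({}^{(a^u)}v)$ for all $a,u,v\in G$. (2) Suppose $G=G(X,r_0)$ and $r=r_G$ is the associated symmetric group of a non-degenerate symmetric set $(X,r_0)$ satisfying lri. If the brace $(G,+,\cdot)$ satisfies Raut, then $(G,r)$ satisfies lri. Consequently, for such $(X,r_0)$, $(G,r_G)$ satisfies lri if and only if $(G,+,\cdot)$ satisfies Raut.
   Context: A symmetric set is a pair $(X,r)$, $X$ nonempty, $r(x,y)=({}^xy,x^y)$ a non-degenerate, involutive bijection of $X\times X$ satisfying $r^{12}r^{23}r^{12}=r^{23}r^{12}r^{23}$ on $X^3$. Condition lri on $(X,r)$: $({}^xy)^x=y={}^x(y^x)$ for all $x,y\in X$. $G(X,r_0)$ is the group generated by $X$ with relations $xy=zt$ whenever $r_0(x,y)=(z,t)$. A symmetric group is $(G,r)$, $G$ a group, $r(u,v)=({}^uv,u^v)$ an involutive bijection of $G\times G$ with ${}^a1=1,{}^1u=u,1^u=1,a^1=a$, ${}^{ab}u={}^a({}^bu)$, $a^{uv}=(a^u)^v$, ${}^a(uv)=({}^au)({}^{a^u}v)$, $(ab)^u=(a^{{}^bu})(b^u)$, $uv=({}^uv)(u^v)$; the associated symmetric group of $(X,r_0)$ is $G(X,r_0)$ with the unique such braiding $r_G$ extending $r_0$. The associated left brace has $a+b:=a({}^{a^{-1}}b)$.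 Condition Raut on the brace: $(a+b)^c=a^c+b^c$ for all $a,b,c\in G$. Condition lri on $(G,r)$: $({}^ab)^a=b={}^a(b^a)$ for all $a,b\in G$. *)

theory Defs
  imports "HOL-Algebra.Group"
begin

text \<open>For r(u,v) = (u-left-acts-on-v, u-right-acted-by-v) we write
  lft r u v for the first component and rgt r u v for the second.\<close>

definition lft :: "('a \<times> 'a \<Rightarrow> 'a \<times> 'a) \<Rightarrow> 'a \<Rightarrow> 'a \<Rightarrow> 'a" where
  "lft r u v = fst (r (u, v))"

definition rgt :: "('a \<times> 'a \<Rightarrow> 'a \<times> 'a) \<Rightarrow> 'a \<Rightarrow> 'a \<Rightarrow> 'a" where
  "rgt r u v = snd (r (u, v))"

definition r12 :: "('a \<times> 'a \<Rightarrow> 'a \<times> 'a) \<Rightarrow> 'a \<times> 'a \<times> 'a \<Rightarrow> 'a \<times> 'a \<times> 'a" where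
  "r12 r t = (case t of (x, y, z) \<Rightarrow> (fst (r (x, y)), snd (r (x, y)), z))"

definition r23 :: "('a \<times> 'a \<Rightarrow> 'a \<times> 'a) \<Rightarrow> 'a \<times> 'a \<times> 'a \<Rightarrow> 'a \<times> 'a \<times> 'a" where
  "r23 r t = (case t of (x, y, z) \<Rightarrow> (x, fst (r (y, z)), snd (r (y, z))))"

definition symmetric_set :: "'a set \<Rightarrow> ('a \<times> 'a \<Rightarrow> 'a \<times> 'a) \<Rightarrow> bool" where
  "symmetric_set X r \<longleftrightarrow>
     X \<noteq> {} \<and>
     bij_betw r (X \<times> X) (X \<times> X) \<and>
     (\<forall>p \<in> X \<times> X. r (r p) = p) \<and>
     (\<forall>x \<in> X. bij_betw (\<lambda>y. lft r x y) X X \<and> bij_betw (\<lambda>y. rgt r y x) X X) \<and>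
     (\<forall>t \<in> X \<times> X \<times> X. r12 r (r23 r (r12 r t)) = r23 r (r12 r (r23 r t)))"

definition lri_set :: "'a set \<Rightarrow> ('a \<times> 'a \<Rightarrow> 'a \<times> 'a) \<Rightarrow> bool" where
  "lri_set X r \<longleftrightarrow>
     (\<forall>x \<in> X. \<forall>y \<in> X. rgt r (lft r x y) x = y \<and> y = lft r x (rgt r y x))"

definition symmetric_group :: "('g, 'm) monoid_scheme \<Rightarrow> ('g \<times> 'g \<Rightarrow> 'g \<times> 'g) \<Rightarrow> bool" where
  "symmetric_group G r \<longleftrightarrow>
     group G \<and>
     bij_betw r (carrier G \<times> carrier G) (carrier G \<times> carrier G) \<and>
     (\<forall>p \<in> carrier G \<times> carrier G. r (r p) = p) \<and>
     (\<forall>a \<in> carrier G. lft r a \<one>\<^bsub>G\<^esub> = \<one>\<^bsub>G\<^esub> \<and> lft r \<one>\<^bsub>G\<^esub> a = a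
        \<and> rgt r \<one>\<^bsub>G\<^esub> a = \<one>\<^bsub>G\<^esub> \<and> rgt r a \<one>\<^bsub>G\<^esub> = a) \<and>
     (\<forall>a \<in> carrier G. \<forall>b \<in> carrier G. \<forall>u \<in> carrier G.
        lft r (a \<otimes>\<^bsub>G\<^esub> b) u = lft r a (lft r b u)) \<and>
     (\<forall>a \<in> carrier G. \<forall>u \<in> carrier G. \<forall>v \<in> carrier G.
        rgt r a (u \<otimes>\<^bsub>G\<^esub> v) = rgt r (rgt r a u) v) \<and>
     (\<forall>a \<in> carrier G. \<forall>u \<in> carrier G. \<forall>v \<in> carrier G.
        lft r a (u \<otimes>\<^bsub>G\<^esub> v) = lft r a u \<otimes>\<^bsub>G\<^esub> lft r (rgt r a u) v) \<and>
     (\<forall>a \<in> carrier G. \<forall>b \<in> carrier G. \<forall>u \<in> carrier G.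
        rgt r (a \<otimes>\<^bsub>G\<^esub> b) u = rgt r a (lft r b u) \<otimes>\<^bsub>G\<^esub> rgt r b u) \<and>
     (\<forall>u \<in> carrier G. \<forall>v \<in> carrier G.
        u \<otimes>\<^bsub>G\<^esub> v = lft r u v \<otimes>\<^bsub>G\<^esub> rgt r u v)"

definition brace_add :: "('g, 'm) monoid_scheme \<Rightarrow> ('g \<times> 'g \<Rightarrow> 'g \<times> 'g) \<Rightarrow> 'g \<Rightarrow> 'g \<Rightarrow> 'g" where
  "brace_add G r a b = a \<otimes>\<^bsub>G\<^esub> lft r (inv\<^bsub>G\<^esub> a) b"

definition Raut :: "('g, 'm) monoid_scheme \<Rightarrow> ('g \<times> 'g \<Rightarrow> 'g \<times> 'g) \<Rightarrow> bool" where
  "Raut G r \<longleftrightarrow>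
     (\<forall>a \<in> carrier G. \<forall>b \<in> carrier G. \<forall>c \<in> carrier G.
        rgt r (brace_add G r a b) c = brace_add G r (rgt r a c) (rgt r b c))"

definition lri_group :: "('g, 'm) monoid_scheme \<Rightarrow> ('g \<times> 'g \<Rightarrow> 'g \<times> 'g) \<Rightarrow> bool" where
  "lri_group G r \<longleftrightarrow>
     (\<forall>a \<in> carrier G. \<forall>b \<in> carrier G. rgt r (lft r a b) a = b \<and> b = lft r a (rgt r b a))"

text \<open>Words over X and X^-1: a letter (x, True) is x, a letter (x, False) is x^-1.\<close>
type_synonym 'x gword = "('x \<times> bool) list"

definition is_word :: "'x set \<Rightarrow> 'x gword \<Rightarrow> bool" where
  "is_word X w \<longleftrightarrow> fst ` set w \<subseteq> X"

inductive gx_eq :: "'x set \<Rightarrow> ('x \<times> 'x \<Rightarrow> 'x \<times> 'x) \<Rightarrow> 'x gword \<Rightarrow> 'x gword \<Rightarrow> bool"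
  for X r0 where
  gx_refl: "is_word X w \<Longrightarrow> gx_eq X r0 w w"
| gx_sym: "gx_eq X r0 u v \<Longrightarrow> gx_eq X r0 v u"
| gx_trans: "gx_eq X r0 u v \<Longrightarrow> gx_eq X r0 v w \<Longrightarrow> gx_eq X r0 u w"
| gx_inv: "x \<in> X \<Longrightarrow> gx_eq X r0 [(x, b), (x, \<not> b)] []"
| gx_rel: "x \<in> X \<Longrightarrow> y \<in> X \<Longrightarrow> r0 (x, y) = (z, t) \<Longrightarrow>
            gx_eq X r0 [(x, True), (y, True)] [(z, True), (t, True)]"
| gx_cong: "gx_eq X r0 u v \<Longrightarrow> is_word X p \<Longrightarrow> is_word X q \<Longrightarrow>
            gx_eq X r0 (p @ u @ q) (p @ v @ q)"

definition gx_class :: "'x set \<Rightarrow> ('x \<times> 'x \<Rightarrow> 'x \<times> 'x) \<Rightarrow> 'x gword \<Rightarrow> 'x gword set" where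
  "gx_class X r0 w = {v. gx_eq X r0 w v}"

definition GX :: "'x set \<Rightarrow> ('x \<times> 'x \<Rightarrow> 'x \<times> 'x) \<Rightarrow> 'x gword set monoid" where
  "GX X r0 = \<lparr> carrier = gx_class X r0 ` {w. is_word X w},
              mult = (\<lambda>A B. {v. \<exists>u \<in> A. \<exists>w \<in> B. gx_eq X r0 (u @ w) v}),
              one = gx_class X r0 [] \<rparr>"

definition gx_emb :: "'x set \<Rightarrow> ('x \<times> 'x \<Rightarrow> 'x \<times> 'x) \<Rightarrow> 'x \<Rightarrow> 'x gword set" where
  "gx_emb X r0 x = gx_class X r0 [(x, True)]"

text \<open>r is the braiding r_G of the associated symmetric group: a symmetric-group
  braiding on G(X,r0) extending r0 (such a braiding is unique).\<close>
definition assoc_sym_group_braiding ::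
  "'x set \<Rightarrow> ('x \<times> 'x \<Rightarrow> 'x \<times> 'x) \<Rightarrow> ('x gword set \<times> 'x gword set \<Rightarrow> 'x gword set \<times> 'x gword set) \<Rightarrow> bool" where
  "assoc_sym_group_braiding X r0 r \<longleftrightarrow>
     symmetric_group (GX X r0) r \<and>
     (\<forall>x \<in> X. \<forall>y \<in> X. r (gx_emb X r0 x, gx_emb X r0 y) =
        (gx_emb X r0 (fst (r0 (x, y))), gx_emb X r0 (snd (r0 (x, y)))))"

end

theory Submission
  imports Defs
begin


locale symgrp =
  fixes G (structure) and r
  assumes sg: "symmetric_group G r"
begin

sublocale group G using sg by (simp add: symmetric_group_def)

abbreviation L where "L a b \<equiv> lft r a b"
abbreviation R where "R a b \<equiv> rgt r a b"

lemma r_eq: "r (a, b) = (L a b, R a b)"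
  by (simp add: lft_def rgt_def)

lemma LR_closed:
  assumes "a \<in> carrier G" "b \<in> carrier G"
  shows "L a b \<in> carrier G" "R a b \<in> carrier G"
proof -
  have "bij_betw r (carrier G \<times> carrier G) (carrier G \<times> carrier G)"
    using sg by (simp add: symmetric_group_def)
  hence "r (a,b) \<in> carrier G \<times> carrier G" using assms bij_betwE by blast
  thus "L a b \<in> carrier G" "R a b \<in> carrier G" by (auto simp: lft_def rgt_def)
qed

lemma one_ax:
  assumes "a \<in> carrier G"
  shows "L a \<one> = \<one>" "L \<one> a = a" "R \<one> a = \<one>" "R a \<one> = a"
  using sg assms unfolding symmetric_group_def by blast+

lemma L_mult: "a \<in> carrier G \<Longrightarrow> b \<in> carrier G \<Longrightarrow> u \<in> carrier G \<Longrightarrow> L (a \<otimes> b) u = L a (L b u)"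
  using sg unfolding symmetric_group_def by blast
lemma R_mult: "a \<in> carrier G \<Longrightarrow> u \<in> carrier G \<Longrightarrow> v \<in> carrier G \<Longrightarrow> R a (u \<otimes> v) = R (R a u) v"
  using sg unfolding symmetric_group_def by blast
lemma L_prod: "a \<in> carrier G \<Longrightarrow> u \<in> carrier G \<Longrightarrow> v \<in> carrier G \<Longrightarrow> L a (u \<otimes> v) = L a u \<otimes> L (R a u) v"
  using sg unfolding symmetric_group_def by blast
lemma R_prod: "a \<in> carrier G \<Longrightarrow> b \<in> carrier G \<Longrightarrow> u \<in> carrier G \<Longrightarrow> R (a \<otimes> b) u = R a (L b u) \<otimes> R b u"
  using sg unfolding symmetric_group_def by blast
lemma split: "u \<in> carrier G \<Longrightarrow> v \<in> carrier G \<Longrightarrow> u \<otimes> v = L u v \<otimes> R u v"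
  using sg unfolding symmetric_group_def by blast

lemma invol:
  assumes "a \<in> carrier G" "b \<in> carrier G"
  shows "L (L a b) (R a b) = a" "R (L a b) (R a b) = b"
proof -
  have "r (r (a,b)) = (a,b)" using sg assms unfolding symmetric_group_def by blast
  thus "L (L a b) (R a b) = a" "R (L a b) (R a b) = b" by (simp_all add: r_eq)
qed

lemma L_inv:
  assumes "a \<in> carrier G" "u \<in> carrier G"
  shows "L (inv a) (L a u) = u" "L a (L (inv a) u) = u"
  using assms by (simp_all add: L_mult[symmetric] one_ax)

lemma R_inv:
  assumes "a \<in> carrier G" "u \<in> carrier G"
  shows "R (R u a) (inv a) = u" "R (R u (inv a)) a = u"
  using assms by (simp_all add: R_mult[symmetric] one_ax)

lemma L_inj:
  assumes "a \<in> carrier G" "u \<in> carrier G" "v \<in> carrier G" "L a u = L a v"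
  shows "u = v"
  by (metis L_inv(1) assms)

definition bplus where "bplus a b = a \<otimes> L (inv a) b"

lemma brace_eq: "brace_add G r = bplus"
  by (simp add: fun_eq_iff brace_add_def bplus_def)

lemma bplus_closed: "a \<in> carrier G \<Longrightarrow> b \<in> carrier G \<Longrightarrow> bplus a b \<in> carrier G"
  by (simp add: bplus_def LR_closed)

lemma bplus_eq_L_def: "a \<in> carrier G \<Longrightarrow> b \<in> carrier G \<Longrightarrow> bplus a (L a b) = a \<otimes> b"
  by (simp add: bplus_def L_inv)

lemma L_add:
  assumes x: "x \<in> carrier G" and a: "a \<in> carrier G" and b: "b \<in> carrier G"
  shows "L x (bplus a b) = bplus (L x a) (L x b)"
proof -
  have c1: "L x a \<in> carrier G" "R x a \<in> carrier G" using LR_closed x a by auto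
  have key: "R x a \<otimes> inv a = inv (L x a) \<otimes> x"
  proof -
    have "L x a \<otimes> R x a = x \<otimes> a" using split[OF x a] by simp
    hence "inv (L x a) \<otimes> (L x a \<otimes> R x a) \<otimes> inv a = inv (L x a) \<otimes> (x \<otimes> a) \<otimes> inv a" by simp
    thus ?thesis using c1 x a by (simp add: m_assoc[symmetric] l_inv r_inv) (simp add: m_assoc r_inv)
  qed
  have "L x (bplus a b) = L x a \<otimes> L (R x a) (L (inv a) b)"
    using L_prod x a b by (simp add: bplus_def LR_closed)
  also have "\<dots> = L x a \<otimes> L (R x a \<otimes> inv a) b" using c1 a b by (simp add: L_mult)
  also have "\<dots> = L x a \<otimes> L (inv (L x a) \<otimes> x) b" by (simp add: key)
  also have "\<dots> = bplus (L x a) (L x b)" using c1 x b by (simp add: L_mult bplus_def)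
  finally show ?thesis .
qed

lemma bplus_comm:
  assumes a: "a \<in> carrier G" and b: "b \<in> carrier G"
  shows "bplus a b = bplus b a"
proof -
  define c where "c = L (inv a) b"
  have c: "c \<in> carrier G" using a b by (simp add: c_def LR_closed)
  have bc: "L a c = b" using a b by (simp add: c_def L_inv)
  have "bplus a b = a \<otimes> c" by (simp add: bplus_def c_def)
  also have "\<dots> = b \<otimes> R a c" using split[OF a c] bc by simp
  also have "R a c = L (inv b) a"
  proof -
    have "L b (R a c) = a" using invol(1)[OF a c] bc by simp
    thus ?thesis using L_inv(1)[of b "R a c"] a b c LR_closed by metis
  qed
  finally show ?thesis by (simp add: bplus_def)
qed

lemma bplus_cancel:
  assumes "a \<in> carrier G" "p \<in> carrier G" "q \<in> carrier G" "bplus a p = bplus a q"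
  shows "p = q"
proof -
  have "L (inv a) p = L (inv a) q" using assms LR_closed by (simp add: bplus_def)
  thus ?thesis using L_inj assms by (metis inv_closed)
qed

end

locale symgrp_lri = symgrp +
  assumes lri: "lri_group G r"
begin

lemma R_L: assumes "a \<in> carrier G" "b \<in> carrier G" shows "R b a = L (inv a) b"
proof -
  have "b = L a (R b a)" using lri assms by (simp add: lri_group_def)
  hence "L (inv a) b = L (inv a) (L a (R b a))" by simp
  thus ?thesis using assms LR_closed L_inv by simp
qed

lemma cyclic: assumes b: "b \<in> carrier G" and c: "c \<in> carrier G" shows "L (L b c) b = L c b"
proof -
  define a where "a = L b c"
  have a: "a \<in> carrier G" using b c by (simp add: a_def LR_closed)
  have ca: "L (inv b) a = c" using b c by (simp add: a_def L_inv)
  have "R (L a b) (R a b) = b" using invol a b by simp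
  hence "L (inv (R a b)) (L a b) = b" using R_L a b LR_closed by simp
  hence "L a b = L (R a b) b" using L_inv(2)[of "R a b" "L a b"] a b LR_closed by (metis inv_closed)
  thus ?thesis using R_L[OF b a] ca by (simp add: a_def)
qed

lemma inv_L: assumes v: "v \<in> carrier G" and a: "a \<in> carrier G" shows "inv (L v a) = L v (inv a)"
proof -
  have "\<one> = L v (a \<otimes> inv a)" using v by (simp add: one_ax a)
  also have "\<dots> = L v a \<otimes> L (R v a) (inv a)" using L_prod[of v a "inv a"] v a by simp
  finally have e: "\<one> = L v a \<otimes> L (R v a) (inv a)" .
  have "R v a = L (inv a) v" using R_L a v by simp
  hence "L (R v a) (inv a) = L v (inv a)" using cyclic[of "inv a" v] a v by simp
  with e have "L v a \<otimes> L v (inv a) = \<one>" by simp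
  hence "L v (inv a) \<otimes> L v a = \<one>" using inv_comm v a LR_closed by (meson inv_closed)
  thus ?thesis using inv_equality v a LR_closed by (meson inv_closed)
qed

lemma identity:
  assumes a: "a \<in> carrier G" and u: "u \<in> carrier G" and v: "v \<in> carrier G"
  shows "L (L v a) u \<otimes> L a v = L a u \<otimes> L (R a u) v"
proof -
  have "R (u \<otimes> v) (inv a) = R u (L v (inv a)) \<otimes> R v (inv a)" using R_prod u v a by simp
  also have "R v (inv a) = L a v" using R_L v a by simp
  also have "R u (L v (inv a)) = L (L v a) u"
  proof -
    have "inv (L v (inv a)) = L v a" using inv_L[of v "inv a"] v a by simp
    thus ?thesis using R_L[of "L v (inv a)" u] u v a LR_closed by simp
  qed
  finally have "R (u \<otimes> v) (inv a) = L (L v a) u \<otimes> L a v" .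
  moreover have "R (u \<otimes> v) (inv a) = L a (u \<otimes> v)" using R_L u v a by simp
  ultimately show ?thesis using L_prod a u v by simp
qed

lemma raut: "Raut G r"
  unfolding Raut_def brace_eq
proof (intro ballI)
  fix a b c assume a: "a \<in> carrier G" and b: "b \<in> carrier G" and c: "c \<in> carrier G"
  have "R (bplus a b) c = L (inv c) (bplus a b)" using R_L c bplus_closed a b by simp
  also have "\<dots> = bplus (L (inv c) a) (L (inv c) b)" using L_add a b c by simp
  finally show "R (bplus a b) c = bplus (R a c) (R b c)"
    using R_L a b c by simp
qed

end


context symgrp
begin

lemma raut_lri:
  assumes raut: "Raut G r"
    and E: "E \<subseteq> carrier G"
    and gen: "\<And>P. P \<one> \<Longrightarrow> (\<And>a e. a \<in> carrier G \<Longrightarrow> e \<in> E \<Longrightarrow> P a \<Longrightarrow> P (a \<otimes> e) \<and> P (a \<otimes> inv e))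
               \<Longrightarrow> (\<forall>a \<in> carrier G. P a)"
    and LE: "\<And>e e'. e \<in> E \<Longrightarrow> e' \<in> E \<Longrightarrow> L e e' \<in> E"
    and LEsurj: "\<And>e e'. e \<in> E \<Longrightarrow> e' \<in> E \<Longrightarrow> \<exists>e''\<in>E. L e e'' = e'"
    and lriE: "\<And>e e'. e \<in> E \<Longrightarrow> e' \<in> E \<Longrightarrow> R (L e e') e = e'"
  shows "lri_group G r"
proof -
  have Rplus: "\<And>a b c. a \<in> carrier G \<Longrightarrow> b \<in> carrier G \<Longrightarrow> c \<in> carrier G \<Longrightarrow>
     R (bplus a b) c = bplus (R a c) (R b c)"
    using raut unfolding Raut_def brace_eq by blast
  have eE: "e \<in> carrier G" if "e \<in> E" for e using E that by blast
  have LaE: "\<forall>a \<in> carrier G. \<forall>e \<in> E. L a e \<in> E"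
  proof (rule gen)
    show "\<forall>e\<in>E. L \<one> e \<in> E" using one_ax eE by simp
  next
    fix a e assume a: "a \<in> carrier G" and e: "e \<in> E" and IH: "\<forall>e\<in>E. L a e \<in> E"
    show "(\<forall>e'\<in>E. L (a \<otimes> e) e' \<in> E) \<and> (\<forall>e'\<in>E. L (a \<otimes> inv e) e' \<in> E)"
    proof (intro conjI ballI)
      fix e' assume e': "e' \<in> E"
      show "L (a \<otimes> e) e' \<in> E" using L_mult a eE e e' IH LE by simp
      obtain e'' where e'': "e'' \<in> E" "L e e'' = e'" using LEsurj e e' by blast
      have "L (inv e) e' = e''" using L_inv(1)[of e e''] e'' eE e by simp
      thus "L (a \<otimes> inv e) e' \<in> E" using L_mult a eE e e' IH e'' by simp
    qed
  qed
  have stepA: "\<forall>y \<in> carrier G. R (L e y) e = y" if e: "e \<in> E" for e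
  proof (rule gen)
    show "R (L e \<one>) e = \<one>" using one_ax eE e by simp
  next
    have phi: "R (L e (bplus p q)) e = bplus (R (L e p) e) (R (L e q) e)"
      if "p \<in> carrier G" "q \<in> carrier G" for p q
      using that L_add Rplus eE[OF e] LR_closed by simp
    fix a e1 assume a: "a \<in> carrier G" and e1: "e1 \<in> E" and IH: "R (L e a) e = a"
    have c1: "e1 \<in> carrier G" using eE e1 .
    have fix1: "R (L e (L p e1)) e = L p e1" if "p \<in> carrier G" for p
      using lriE e LaE that e1 by blast
    show "R (L e (a \<otimes> e1)) e = a \<otimes> e1 \<and> R (L e (a \<otimes> inv e1)) e = a \<otimes> inv e1"
    proof
      have "a \<otimes> e1 = bplus a (L a e1)" using bplus_eq_L_def a c1 by simp
      thus "R (L e (a \<otimes> e1)) e = a \<otimes> e1"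
        using phi[of a "L a e1"] a c1 LR_closed IH fix1 by simp
    next
      define b where "b = a \<otimes> inv e1"
      have b: "b \<in> carrier G" using a c1 by (simp add: b_def)
      have ab: "a = bplus b (L b e1)" using bplus_eq_L_def b c1 a by (simp add: b_def m_assoc l_inv)
      have c2: "L b e1 \<in> carrier G" using b c1 LR_closed by simp
      have c3: "R (L e b) e \<in> carrier G" using b LR_closed eE e by simp
      have "bplus (R (L e b) e) (L b e1) = bplus b (L b e1)"
        using phi[of b "L b e1"] b c2 fix1[OF b] IH ab by simp
      hence "bplus (L b e1) (R (L e b) e) = bplus (L b e1) b"
        using bplus_comm c2 c3 b by simp
      hence "R (L e b) e = b" using bplus_cancel c2 c3 b by blast
      thus "R (L e (a \<otimes> inv e1)) e = a \<otimes> inv e1" by (simp add: b_def)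
    qed
  qed
  have RisL: "R z e = L (inv e) z" if e: "e \<in> E" and z: "z \<in> carrier G" for e z
  proof -
    have "R z e = R (L e (L (inv e) z)) e" using L_inv(2) eE[OF e] z by simp
    also have "\<dots> = L (inv e) z" using stepA[OF e] LR_closed eE[OF e] z by simp
    finally show ?thesis .
  qed
  have S: "\<forall>a \<in> carrier G. \<forall>y \<in> carrier G. R (L a y) a = y"
  proof (rule gen)
    show "\<forall>y\<in>carrier G. R (L \<one> y) \<one> = y" using one_ax by simp
  next
    fix a e assume a: "a \<in> carrier G" and e: "e \<in> E" and IH: "\<forall>y\<in>carrier G. R (L a y) a = y"
    have c: "e \<in> carrier G" using eE e .
    show "(\<forall>y\<in>carrier G. R (L (a \<otimes> e) y) (a \<otimes> e) = y) \<and>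
          (\<forall>y\<in>carrier G. R (L (a \<otimes> inv e) y) (a \<otimes> inv e) = y)"
    proof (intro conjI ballI)
      fix y assume y: "y \<in> carrier G"
      have "R (L (a \<otimes> e) y) (a \<otimes> e) = R (R (L a (L e y)) a) e"
        using L_mult R_mult a c y LR_closed by simp
      also have "\<dots> = y" using IH stepA[OF e] LR_closed c y by simp
      finally show "R (L (a \<otimes> e) y) (a \<otimes> e) = y" .
      define w where "w = R (L (inv e) y) (inv e)"
      have w: "w \<in> carrier G" using LR_closed c y by (simp add: w_def)
      have "R (L (a \<otimes> inv e) y) (a \<otimes> inv e) = R (R (L a (L (inv e) y)) a) (inv e)"
        using L_mult R_mult a c y LR_closed by simp
      also have "\<dots> = w" using IH LR_closed c y by (simp add: w_def)
      also have "w = y"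
      proof -
        have "R w e = L (inv e) y" unfolding w_def using R_inv(2)[of e "L (inv e) y"] c y LR_closed
          by simp
        moreover have "R w e = L (inv e) w" using RisL e w by simp
        ultimately show ?thesis using L_inj[of "inv e" w y] c w y by simp
      qed
      finally show "R (L (a \<otimes> inv e) y) (a \<otimes> inv e) = y" .
    qed
  qed
  show ?thesis unfolding lri_group_def
  proof (intro ballI conjI)
    fix a b assume a: "a \<in> carrier G" and b: "b \<in> carrier G"
    show "R (L a b) a = b" using S a b by simp
    have "R b a = R (L a (L (inv a) b)) a" using L_inv(2) a b by simp
    also have "\<dots> = L (inv a) b" using S a b LR_closed by simp
    finally show "b = L a (R b a)" using L_inv(2) a b by simp
  qed
qed

end


definition closedr :: "'x set \<Rightarrow> ('x \<times> 'x \<Rightarrow> 'x \<times> 'x) \<Rightarrow> bool" where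
  "closedr X r0 \<longleftrightarrow> (\<forall>x\<in>X. \<forall>y\<in>X. fst (r0 (x,y)) \<in> X \<and> snd (r0 (x,y)) \<in> X)"

lemma gx_wf: "gx_eq X r0 u v \<Longrightarrow> closedr X r0 \<Longrightarrow> is_word X u \<and> is_word X v"
proof (induction rule: gx_eq.induct)
  case (gx_rel x y z t)
  then show ?case by (auto simp: is_word_def closedr_def) (metis fst_conv snd_conv)+
qed (auto simp: is_word_def)

lemma class_eq: "gx_eq X r0 u v \<Longrightarrow> gx_class X r0 u = gx_class X r0 v"
  unfolding gx_class_def by (auto intro: gx_eq.gx_sym gx_eq.gx_trans)

lemma mult_class:
  assumes c: "closedr X r0" and u: "is_word X u" and w: "is_word X w"
  shows "gx_class X r0 u \<otimes>\<^bsub>GX X r0\<^esub> gx_class X r0 w = gx_class X r0 (u @ w)"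
proof -
  have "gx_eq X r0 (u @ w) v" if "gx_eq X r0 u u'" "gx_eq X r0 w w'" "gx_eq X r0 (u' @ w') v" for u' w' v
  proof -
    have u': "is_word X u'" using gx_wf[OF that(1) c] by simp
    have "gx_eq X r0 ([] @ u @ w) ([] @ u' @ w)"
      using gx_eq.gx_cong[OF that(1), of "[]" w] w by (simp add: is_word_def)
    moreover have "gx_eq X r0 (u' @ w @ []) (u' @ w' @ [])"
      using gx_eq.gx_cong[OF that(2), of u' "[]"] u' by (simp add: is_word_def)
    ultimately show ?thesis using that(3) by (auto intro: gx_eq.gx_trans)
  qed
  moreover have "gx_eq X r0 u u" "gx_eq X r0 w w" using u w by (auto intro: gx_eq.gx_refl)
  ultimately show ?thesis unfolding GX_def gx_class_def by auto
qed

lemma gx_gen: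
  assumes grp: "group (GX X r0)" and c: "closedr X r0"
    and P1: "P \<one>\<^bsub>GX X r0\<^esub>"
    and step: "\<And>a e. a \<in> carrier (GX X r0) \<Longrightarrow> e \<in> gx_emb X r0 ` X \<Longrightarrow> P a \<Longrightarrow>
        P (a \<otimes>\<^bsub>GX X r0\<^esub> e) \<and> P (a \<otimes>\<^bsub>GX X r0\<^esub> inv\<^bsub>GX X r0\<^esub> e)"
  shows "\<forall>a \<in> carrier (GX X r0). P a"
proof -
  interpret group "GX X r0" by (rule grp)
  have "is_word X w \<longrightarrow> P (gx_class X r0 w)" for w
  proof (induction w rule: rev_induct)
    case Nil
    then show ?case using P1 by (simp add: GX_def)
  next
    case (snoc zb w)
    obtain z b where zb: "zb = (z, b)" by (cases zb)
    show ?case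
    proof
      assume wz: "is_word X (w @ [zb])"
      have w: "is_word X w" and z: "z \<in> X" using wz zb by (auto simp: is_word_def)
      have wc: "gx_class X r0 w \<in> carrier (GX X r0)" using w by (simp add: GX_def)
      have Pw: "P (gx_class X r0 w)" using snoc w by simp
      have e: "gx_emb X r0 z \<in> gx_emb X r0 ` X" using z by simp
      have ec: "gx_emb X r0 z \<in> carrier (GX X r0)" using z
        by (simp add: GX_def gx_emb_def is_word_def)
      have eq: "gx_class X r0 (w @ [zb]) = gx_class X r0 w \<otimes>\<^bsub>GX X r0\<^esub> gx_class X r0 [(z,b)]"
        using mult_class[OF c w, of "[(z,b)]"] z zb by (simp add: is_word_def)
      show "P (gx_class X r0 (w @ [zb]))"
      proof (cases b)
        case True
        then show ?thesis using eq step[OF wc e Pw] by (simp add: gx_emb_def)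
      next
        case False
        have fc: "gx_class X r0 [(z,False)] \<in> carrier (GX X r0)" using z
          by (simp add: GX_def is_word_def)
        have "gx_class X r0 [(z,False)] \<otimes>\<^bsub>GX X r0\<^esub> gx_emb X r0 z = gx_class X r0 ([(z,False)] @ [(z,True)])"
          unfolding gx_emb_def using mult_class[OF c] z by (simp add: is_word_def)
        also have "\<dots> = gx_class X r0 []"
          using class_eq[OF gx_eq.gx_inv[where x=z and b=False]] z by simp
        also have "\<dots> = \<one>\<^bsub>GX X r0\<^esub>" by (simp add: GX_def)
        finally have "inv\<^bsub>GX X r0\<^esub> gx_emb X r0 z = gx_class X r0 [(z,False)]"
          using inv_equality fc ec by blast
        then show ?thesis using eq step[OF wc e Pw] False by simp
      qed
    qed
  qed
  thus ?thesis by (auto simp: GX_def)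
qed

theorem mainTheorem13:
  shows "(\<forall>(G :: ('g, 'm) monoid_scheme) r. symmetric_group G r \<and> lri_group G r \<longrightarrow>
            Raut G r \<and>
            (\<forall>a \<in> carrier G. \<forall>u \<in> carrier G. \<forall>v \<in> carrier G.
               lft r (lft r v a) u \<otimes>\<^bsub>G\<^esub> lft r a v = lft r a u \<otimes>\<^bsub>G\<^esub> lft r (rgt r a u) v))
       \<and>
         (\<forall>(X :: 'x set) r0 r. symmetric_set X r0 \<and> lri_set X r0 \<and> assoc_sym_group_braiding X r0 r \<longrightarrow>
            (Raut (GX X r0) r \<longrightarrow> lri_group (GX X r0) r) \<and>
            (lri_group (GX X r0) r \<longleftrightarrow> Raut (GX X r0) r))"
proof (intro conjI allI impI)
  fix G :: "('g, 'm) monoid_scheme" and r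
  assume "symmetric_group G r \<and> lri_group G r"
  then interpret symgrp_lri G r by (simp add: symgrp_lri_def symgrp_def symgrp_lri_axioms_def)
  show "Raut G r" by (rule raut)
  show "\<forall>a \<in> carrier G. \<forall>u \<in> carrier G. \<forall>v \<in> carrier G.
               lft r (lft r v a) u \<otimes>\<^bsub>G\<^esub> lft r a v = lft r a u \<otimes>\<^bsub>G\<^esub> lft r (rgt r a u) v"
    using identity by blast
next
  fix X :: "'x set" and r0 r
  assume H: "symmetric_set X r0 \<and> lri_set X r0 \<and> assoc_sym_group_braiding X r0 r"
  have sg: "symmetric_group (GX X r0) r" and ext:
    "\<forall>x \<in> X. \<forall>y \<in> X. r (gx_emb X r0 x, gx_emb X r0 y) =
        (gx_emb X r0 (fst (r0 (x, y))), gx_emb X r0 (snd (r0 (x, y))))"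
    using H by (auto simp: assoc_sym_group_braiding_def)
  interpret symgrp "GX X r0" r using sg by (simp add: symgrp_def)
  have bij0: "bij_betw r0 (X \<times> X) (X \<times> X)" using H by (simp add: symmetric_set_def)
  have c: "closedr X r0" unfolding closedr_def
  proof (intro ballI)
    fix x y assume "x \<in> X" "y \<in> X"
    hence "r0 (x,y) \<in> X \<times> X" using bij0 bij_betwE by blast
    thus "fst (r0 (x, y)) \<in> X \<and> snd (r0 (x, y)) \<in> X" by auto
  qed
  have Lext: "L (gx_emb X r0 x) (gx_emb X r0 y) = gx_emb X r0 (lft r0 x y)"
    and Rext: "R (gx_emb X r0 x) (gx_emb X r0 y) = gx_emb X r0 (rgt r0 x y)"
    if "x \<in> X" "y \<in> X" for x y
    using ext that by (simp_all add: lft_def rgt_def)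
  have lX: "lft r0 x y \<in> X" "rgt r0 x y \<in> X" if "x \<in> X" "y \<in> X" for x y
    using c that by (simp_all add: closedr_def lft_def rgt_def)
  show "Raut (GX X r0) r \<Longrightarrow> lri_group (GX X r0) r"
  proof (rule raut_lri[where E = "gx_emb X r0 ` X"])
    show "gx_emb X r0 ` X \<subseteq> carrier (GX X r0)"
      by (auto simp: GX_def gx_emb_def is_word_def)
  next
    fix P assume "P \<one>\<^bsub>GX X r0\<^esub>" "\<And>a e. a \<in> carrier (GX X r0) \<Longrightarrow> e \<in> gx_emb X r0 ` X \<Longrightarrow> P a \<Longrightarrow>
        P (a \<otimes>\<^bsub>GX X r0\<^esub> e) \<and> P (a \<otimes>\<^bsub>GX X r0\<^esub> inv\<^bsub>GX X r0\<^esub> e)"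
    thus "\<forall>a \<in> carrier (GX X r0). P a" using gx_gen[OF is_group c] by blast
  next
    fix e e' assume "e \<in> gx_emb X r0 ` X" "e' \<in> gx_emb X r0 ` X"
    then obtain x y where x: "x \<in> X" "e = gx_emb X r0 x" and y: "y \<in> X" "e' = gx_emb X r0 y" by blast
    show "L e e' \<in> gx_emb X r0 ` X" using Lext x y lX by simp
    have "bij_betw (\<lambda>y. lft r0 x y) X X" using H x by (simp add: symmetric_set_def)
    then obtain y'' where y'': "y'' \<in> X" "lft r0 x y'' = y" using y
      by (metis bij_betw_iff_bijections)
    show "\<exists>e''\<in>gx_emb X r0 ` X. L e e'' = e'"
      using y'' Lext x y by (intro bexI[of _ "gx_emb X r0 y''"]) auto
    have "rgt r0 (lft r0 x y) x = y" using H x y by (simp add: lri_set_def)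
    thus "R (L e e') e = e'" using Lext Rext x y lX by simp
  qed
  show "lri_group (GX X r0) r \<longleftrightarrow> Raut (GX X r0) r"
  proof
    assume "lri_group (GX X r0) r"
    then interpret symgrp_lri "GX X r0" r by (simp add: symgrp_lri_def symgrp_lri_axioms_def symgrp_axioms)
    show "Raut (GX X r0) r" by (rule raut)
  qed (fact)
qed

end
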